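(* Let $R$ be a Bézout domain and let $A,B,C\in R^{n\times n}$ satisfy $ABA=ACA$. If $AB$ and $CA$ are group invertible, then $(AB)(AB)^{\#}$ is similar to $(CA)(CA)^{\#}$.
   Context: A Bézout domain is an integral domain in which every finitely generated ideal is principal. A matrix $M\in R^{n\times n}$ is group invertible if there exists $X\in R^{n\times n}$ with $MX=XM$, $XMX=X$, $MXM=M$; such $X$ is unique and denoted $M^{\#}$. Two matrices $M,N\in R^{n\times n}$ are similar if $M=S^{-1}NS$ for some invertible $S\in R^{n\times n}$. *)

theory Defs
  imports "Jordan_Normal_Form.Matrix"
begin

text \<open>Bezout domain: an integral domain (type class idom) in which every finitely
  generated ideal is principal.\<close>
definition bezout_domain :: "'a::idom itself \<Rightarrow> bool" where
  "bezout_domain _ \<longleftrightarrow>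
     (\<forall>S :: 'a set. finite S \<longrightarrow>
        (\<exists>d. {x. \<exists>c. x = (\<Sum>s\<in>S. c s * s)} = {x. \<exists>r. x = r * d}))"

definition is_group_inverse :: "'a::comm_ring_1 mat \<Rightarrow> 'a mat \<Rightarrow> bool" where
  "is_group_inverse M X \<longleftrightarrow>
     (let n = dim_row M in M \<in> carrier_mat n n \<and> X \<in> carrier_mat n n \<and>
        M * X = X * M \<and> X * M * X = X \<and> M * X * M = M)"

definition group_invertible :: "'a::comm_ring_1 mat \<Rightarrow> bool" where
  "group_invertible M \<longleftrightarrow> (\<exists>X. is_group_inverse M X)"

definition group_inv :: "'a::comm_ring_1 mat \<Rightarrow> 'a mat" where
  "group_inv M = (THE X. is_group_inverse M X)"

end

theory Submission
  imports Defs "Jordan_Normal_Form.Determinant"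
begin

lemma assocn: "A \<in> carrier_mat n n \<Longrightarrow> B \<in> carrier_mat n n \<Longrightarrow> C \<in> carrier_mat n n \<Longrightarrow> A * B * C = A * (B * C)"
  by (rule assoc_mult_mat)
lemma multn: "A \<in> carrier_mat n n \<Longrightarrow> B \<in> carrier_mat n n \<Longrightarrow> A * B \<in> carrier_mat n n"
  by (rule mult_carrier_mat)

definition dg :: "nat \<Rightarrow> (nat \<Rightarrow> 'a::comm_ring_1) \<Rightarrow> 'a mat" where
  "dg n d = mat n n (\<lambda>(i,j). if i = j then d i else 0)"

lemma dg_carrier[simp]: "dg n d \<in> carrier_mat n n" by (simp add: dg_def)
lemma dg_dims[simp]: "dim_row (dg n d) = n" "dim_col (dg n d) = n" by (auto simp: dg_def)
lemma dg_index[simp]: "i < n \<Longrightarrow> j < n \<Longrightarrow> dg n d $$ (i,j) = (if i = j then d i else 0)"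
  by (simp add: dg_def)

lemma mult_dg_index:
  assumes "Z \<in> carrier_mat m n" "i < m" "j < n"
  shows "(Z * dg n d) $$ (i,j) = Z $$ (i,j) * d j"
proof -
  have "(Z * dg n d) $$ (i,j) = (\<Sum>l\<in>{0..<n}. Z $$ (i,l) * (if l = j then d j else 0))"
    using assms by (auto simp: dg_def scalar_prod_def intro!: sum.cong)
  also have "\<dots> = Z $$ (i,j) * d j" using assms
    by (simp add: if_distrib cong: if_cong)
  finally show ?thesis .
qed

lemma dg_mult_index:
  assumes "Z \<in> carrier_mat n m" "i < n" "j < m"
  shows "(dg n d * Z) $$ (i,j) = d i * Z $$ (i,j)"
proof -
  have "(dg n d * Z) $$ (i,j) = (\<Sum>l\<in>{0..<n}. (if i = l then d i else 0) * Z $$ (l,j))"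
    using assms by (auto simp: dg_def scalar_prod_def intro!: sum.cong)
  also have "\<dots> = (\<Sum>l\<in>{0..<n}. if i = l then d i * Z $$ (i,j) else 0)"
    by (rule sum.cong) auto
  also have "\<dots> = d i * Z $$ (i,j)" using assms by simp
  finally show ?thesis .
qed

lemma dg_dg: "dg n d * dg n e = dg n (\<lambda>i. d i * e i)"
  by (rule eq_matI) (auto simp del: index_mult_mat(1) simp: mult_dg_index[of "dg n d" n n])

lemma dg_add: "dg n d + dg n e = dg n (\<lambda>i. d i + e i)"
  by (rule eq_matI, auto)

lemma dg_one: "dg n (\<lambda>i. 1) = 1\<^sub>m n"
  by (rule eq_matI, auto)

lemma dg_zero: "(\<And>i. i < n \<Longrightarrow> d i = 0) \<Longrightarrow> dg n d = 0\<^sub>m n n"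
  by (rule eq_matI, auto)

definition Dm :: "nat \<Rightarrow> nat \<Rightarrow> 'a::comm_ring_1 mat" where
  "Dm r n = dg n (\<lambda>i. if i < r then 1 else 0)"
definition Km :: "nat \<Rightarrow> nat \<Rightarrow> 'a::comm_ring_1 mat" where
  "Km r n = dg n (\<lambda>i. if i < r then 0 else 1)"

lemma Dm_carrier[simp]: "Dm r n \<in> carrier_mat n n" by (simp add: Dm_def)
lemma Km_carrier[simp]: "Km r n \<in> carrier_mat n n" by (simp add: Km_def)
lemma DK_dims[simp]: "dim_row (Dm r n) = n" "dim_col (Dm r n) = n" "dim_row (Km r n) = n" "dim_col (Km r n) = n"
  by (auto simp: Dm_def Km_def)

lemma det_zero_col:
  fixes M :: "'a::idom mat"
  assumes M: "M \<in> carrier_mat n n" and r: "r < n" and z: "\<And>i. i < n \<Longrightarrow> M $$ (i,r) = 0"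
  shows "det M = 0"
proof -
  show "det M = 0"
    unfolding det_col[OF M]
  proof (rule sum.neutral, intro ballI)
    fix p assume "p \<in> {p. p permutes {0..<n}}"
    hence "p r < n" using r by (simp add: permutes_in_image)
    hence "(\<Prod>j<n. M $$ (p j, j)) = 0" using r z
      by (intro prod_zero) auto
    thus "signof p * (\<Prod>j<n. M $$ (p j, j)) = 0" by simp
  qed
qed

lemma mvn_lt_False:
  fixes X Y :: "'a::idom mat"
  assumes X: "X \<in> carrier_mat n n" and Y: "Y \<in> carrier_mat n n"
    and XY: "X * Y = Dm r n" and YX: "Y * X = Dm s n" and rs: "r < s" and sn: "s \<le> n"
  shows False
proof -
  let ?Dr = "Dm r n :: 'a mat" and ?Ds = "Dm s n :: 'a mat" and ?K = "Km s n :: 'a mat"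
  define M where "M = ?Ds * Y * ?Dr + ?K"
  define N where "N = ?Dr * X * ?Ds + ?K"
  have M: "M \<in> carrier_mat n n" and N: "N \<in> carrier_mat n n" using X Y by (auto simp: M_def N_def)
  have DrK: "?Dr * ?K = 0\<^sub>m n n" unfolding Dm_def Km_def dg_dg using rs by (intro dg_zero) auto
  have KDr: "?K * ?Dr = 0\<^sub>m n n" unfolding Dm_def Km_def dg_dg using rs by (intro dg_zero) auto
  have KK: "?K * ?K = ?K" unfolding Km_def dg_dg by (intro arg_cong[where f="dg n"]) auto
  have DsDs: "?Ds * ?Ds = ?Ds" unfolding Dm_def dg_dg by (intro arg_cong[where f="dg n"]) auto
  have DrDr: "?Dr * ?Dr = ?Dr" unfolding Dm_def dg_dg by (intro arg_cong[where f="dg n"]) auto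
  have DsK: "?Ds + ?K = 1\<^sub>m n" unfolding Dm_def Km_def dg_add dg_one[symmetric]
    by (intro arg_cong[where f="dg n"]) auto
  have YDrX: "Y * (?Dr * X) = ?Ds"
  proof -
    have "Y * (?Dr * X) = Y * (X * Y * X)" by (simp add: XY)
    also have "\<dots> = (Y * X) * (Y * X)" using X Y by (simp add: assocn[where n=n] multn[where n=n])
    also have "\<dots> = ?Ds" using YX DsDs by simp
    finally show ?thesis .
  qed
  have PQ: "?Ds * Y * ?Dr * (?Dr * X * ?Ds) = ?Ds"
  proof -
    have "?Ds * Y * ?Dr * (?Dr * X * ?Ds) = ?Ds * (Y * ((?Dr * ?Dr) * X)) * ?Ds"
      using X Y by (simp add: assocn[where n=n] multn[where n=n])
    also have "\<dots> = ?Ds * ?Ds * ?Ds" using YDrX DrDr by simp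
    finally show ?thesis using DsDs by simp
  qed
  have PK: "?Ds * Y * ?Dr * ?K = 0\<^sub>m n n"
  proof -
    have "?Ds * Y * ?Dr * ?K = ?Ds * Y * (?Dr * ?K)" using Y by (simp add: assocn[where n=n] multn[where n=n])
    thus ?thesis using DrK Y by simp
  qed
  have KQ: "?K * (?Dr * X * ?Ds) = 0\<^sub>m n n"
  proof -
    have "?K * (?Dr * X * ?Ds) = (?K * ?Dr) * X * ?Ds" using X by (simp add: assocn[where n=n] multn[where n=n])
    thus ?thesis using KDr X by simp
  qed
  have MN: "M * N = 1\<^sub>m n"
  proof -
    have Pc: "?Ds * Y * ?Dr \<in> carrier_mat n n" and Qc: "?Dr * X * ?Ds \<in> carrier_mat n n" using X Y by auto
    have "M * N = ?Ds * Y * ?Dr * (?Dr * X * ?Ds + ?K) + ?K * (?Dr * X * ?Ds + ?K)"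
      unfolding M_def N_def by (rule add_mult_distrib_mat[of _ n n]) (use Pc Qc in auto)
    also have "\<dots> = (?Ds * Y * ?Dr * (?Dr * X * ?Ds) + ?Ds * Y * ?Dr * ?K) + (?K * (?Dr * X * ?Ds) + ?K * ?K)"
      using mult_add_distrib_mat[OF Pc Qc Km_carrier] mult_add_distrib_mat[OF Km_carrier Qc Km_carrier] by simp
    also have "\<dots> = ?Ds + ?K" unfolding PQ PK KQ KK by simp
    finally show ?thesis using DsK by simp
  qed
  have "det M = 0"
  proof (rule det_zero_col[OF M, of r])
    show "r < n" using rs sn by simp
    fix i assume i: "i < n"
    have "(?Ds * Y * ?Dr) $$ (i,r) = 0"
      unfolding Dm_def using i rs sn X Y by (subst mult_dg_index[of _ n]) auto
    thus "M $$ (i,r) = 0" unfolding M_def using i rs sn X Y by (simp add: Km_def)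
  qed
  moreover have "det M * det N = 1" using det_mult[OF M N] MN by simp
  ultimately show False by simp
qed

lemma mvn_eq:
  fixes X Y :: "'a::idom mat"
  assumes X: "X \<in> carrier_mat n n" and Y: "Y \<in> carrier_mat n n"
    and XY: "X * Y = Dm r n" and YX: "Y * X = Dm s n" and "r \<le> n" "s \<le> n"
  shows "r = s"
proof -
  have "\<not> r < s" using mvn_lt_False[OF X Y XY YX] assms by blast
  moreover have "\<not> s < r" using mvn_lt_False[OF Y X YX XY] assms by blast
  ultimately show ?thesis by simp
qed

lemma sim_mvn_eq:
  fixes E F X Y :: "'a::idom mat"
  assumes X: "X \<in> carrier_mat n n" and Y: "Y \<in> carrier_mat n n"
    and E: "X * Y = E" and F: "Y * X = F"
    and sE: "similar_mat E (Dm r n)" and sF: "similar_mat F (Dm s n)" and "r \<le> n" "s \<le> n"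
  shows "r = s"
proof -
  have Ec: "E \<in> carrier_mat n n" and Fc: "F \<in> carrier_mat n n" using X Y E F by auto
  from similar_matD[OF sE] obtain m P1 Q1 where 1: "{E, Dm r n, P1, Q1} \<subseteq> carrier_mat m m"
    "P1 * Q1 = 1\<^sub>m m" "Q1 * P1 = 1\<^sub>m m" "E = P1 * Dm r n * Q1" by blast
  from similar_matD[OF sF] obtain m' P2 Q2 where 2: "{F, Dm s n, P2, Q2} \<subseteq> carrier_mat m' m'"
    "P2 * Q2 = 1\<^sub>m m'" "Q2 * P2 = 1\<^sub>m m'" "F = P2 * Dm s n * Q2" by blast
  have mm: "m = n" "m' = n" using 1(1) 2(1) Ec Fc by auto
  have P1: "P1 \<in> carrier_mat n n" "Q1 \<in> carrier_mat n n" using 1(1) mm by auto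
  have P2: "P2 \<in> carrier_mat n n" "Q2 \<in> carrier_mat n n" using 2(1) mm by auto
  have 11: "Q1 * P1 = 1\<^sub>m n" "P1 * Q1 = 1\<^sub>m n" using 1 mm by auto
  have 22: "Q2 * P2 = 1\<^sub>m n" "P2 * Q2 = 1\<^sub>m n" using 2 mm by auto
  have Dr: "Dm r n = Q1 * E * P1"
  proof -
    have "Q1 * E * P1 = (Q1 * P1) * Dm r n * (Q1 * P1)" using 1(4) P1 by (simp add: assocn[where n=n] multn[where n=n])
    thus ?thesis using 11 by simp
  qed
  have Ds: "Dm s n = Q2 * F * P2"
  proof -
    have "Q2 * F * P2 = (Q2 * P2) * Dm s n * (Q2 * P2)" using 2(4) P2 by (simp add: assocn[where n=n] multn[where n=n])
    thus ?thesis using 22 by simp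
  qed
  let ?X = "Q1 * X * P2" and ?Y = "Q2 * Y * P1"
  have a: "?X * ?Y = Dm r n"
  proof -
    have "?X * ?Y = Q1 * X * (P2 * Q2) * Y * P1" using X Y P1 P2 by (simp add: assocn[where n=n] multn[where n=n])
    also have "\<dots> = Q1 * E * P1" using 22 X Y P1 P2 E[symmetric] by simp
    finally show ?thesis using Dr by simp
  qed
  have b: "?Y * ?X = Dm s n"
  proof -
    have "?Y * ?X = Q2 * Y * (P1 * Q1) * X * P2" using X Y P1 P2 by (simp add: assocn[where n=n] multn[where n=n])
    also have "\<dots> = Q2 * F * P2" using 11 X Y P1 P2 F[symmetric] by simp
    finally show ?thesis using Ds by simp
  qed
  show ?thesis by (rule mvn_eq[OF _ _ a b]) (use X Y P1 P2 assms in auto)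
qed

lemma bezout2:
  fixes a b :: "'a::idom"
  assumes bz: "bezout_domain TYPE('a)"
  shows "\<exists>d x y a' b'. a = a' * d \<and> b = b' * d \<and> d = x * a + y * b"
proof -
  from bz[unfolded bezout_domain_def, rule_format, of "{a,b}"]
  obtain d where I: "{x. \<exists>c. x = (\<Sum>s\<in>{a,b}. c s * s)} = {x. \<exists>r. x = r * d}" by auto
  have "d \<in> {x. \<exists>r. x = r * d}" by (auto intro: exI[of _ 1])
  then obtain c where c: "d = (\<Sum>s\<in>{a,b}. c s * s)" unfolding I[symmetric] by auto
  have dxy: "\<exists>x y. d = x * a + y * b"
  proof (cases "a = b")
    case True then have "d = c a * a" using c by simp
    thus ?thesis by (intro exI[of _ "c a"] exI[of _ 0]) simp
  next
    case False then show ?thesis using c by auto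
  qed
  have "(\<Sum>s\<in>{a,b}. (if s = a then 1 else 0) * s) = (\<Sum>s\<in>{a,b}. if s = a then a else 0)"
    by (rule sum.cong) auto
  also have "\<dots> = a" by (subst sum.delta) auto
  finally have "a \<in> {x. \<exists>c. x = (\<Sum>s\<in>{a,b}. c s * s)}"
    by (auto intro!: exI[of _ "\<lambda>s. if s = a then 1 else 0"])
  then obtain a' where a': "a = a' * d" unfolding I by auto
  have "(\<Sum>s\<in>{a,b}. (if s = b then 1 else 0) * s) = (\<Sum>s\<in>{a,b}. if s = b then b else 0)"
    by (rule sum.cong) auto
  also have "\<dots> = b" by (subst sum.delta) auto
  finally have "b \<in> {x. \<exists>c. x = (\<Sum>s\<in>{a,b}. c s * s)}"
    by (auto intro!: exI[of _ "\<lambda>s. if s = b then 1 else 0"])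
  then obtain b' where b': "b = b' * d" unfolding I by auto
  show ?thesis using dxy a' b' by blast
qed

definition emb :: "nat \<Rightarrow> nat \<Rightarrow> 'a \<Rightarrow> 'a \<Rightarrow> 'a \<Rightarrow> 'a \<Rightarrow> 'a::comm_ring_1 mat" where
  "emb n k a b c d = mat n n (\<lambda>(i,j). if i = 0 then (if j = 0 then a else if j = k then b else 0)
     else if i = k then (if j = 0 then c else if j = k then d else 0) else if i = j then 1 else 0)"

lemma emb_carrier[simp]: "emb n k a b c d \<in> carrier_mat n n" by (simp add: emb_def)
lemma emb_index[simp]: "i < n \<Longrightarrow> j < n \<Longrightarrow> emb n k a b c d $$ (i,j) = (if i = 0 then (if j = 0 then a else if j = k then b else 0)
     else if i = k then (if j = 0 then c else if j = k then d else 0) else if i = j then 1 else 0)"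
  by (simp add: emb_def)
lemma emb_dims[simp]: "dim_row (emb n k a b c d) = n" "dim_col (emb n k a b c d) = n" by (auto simp: emb_def)

lemma emb_row_sum:
  fixes f :: "nat \<Rightarrow> 'a::comm_ring_1"
  assumes k: "0 < k" "k < n" and i: "i < n"
  shows "(\<Sum>l\<in>{0..<n}. emb n k a b c d $$ (i,l) * f l) =
    (if i = 0 then a * f 0 + b * f k else if i = k then c * f 0 + d * f k else f i)"
proof -
  have 0: "0 \<in> {0..<n}" and kk: "k \<in> {0..<n}" using k by auto
  have "(\<Sum>l\<in>{0..<n}. emb n k a b c d $$ (i,l) * f l) =
    (\<Sum>l\<in>{0..<n}. (if l = 0 then (emb n k a b c d $$ (i,0)) * f 0 else 0) +
                   (if l = k then (emb n k a b c d $$ (i,k)) * f k else 0) +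
                   (if l = i \<and> i \<noteq> 0 \<and> i \<noteq> k then f i else 0))"
    by (rule sum.cong) (use k i in \<open>auto simp: emb_def\<close>)
  also have "\<dots> = emb n k a b c d $$ (i,0) * f 0 + emb n k a b c d $$ (i,k) * f k +
       (if i \<noteq> 0 \<and> i \<noteq> k then f i else 0)"
    using k i by (simp add: sum.distrib)
  also have "\<dots> = (if i = 0 then a * f 0 + b * f k else if i = k then c * f 0 + d * f k else f i)"
    using k i by (auto simp: emb_def)
  finally show ?thesis .
qed

lemma emb_mult_index:
  assumes k: "0 < k" "k < n" and Z: "Z \<in> carrier_mat n m" and i: "i < n" and j: "j < m"
  shows "(emb n k a b c d * Z) $$ (i,j) =
    (if i = 0 then a * Z $$ (0,j) + b * Z $$ (k,j) else if i = k then c * Z $$ (0,j) + d * Z $$ (k,j) else Z $$ (i,j))"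
proof -
  have "(emb n k a b c d * Z) $$ (i,j) = (\<Sum>l\<in>{0..<n}. emb n k a b c d $$ (i,l) * Z $$ (l,j))"
    using Z i j by (auto simp: scalar_prod_def intro!: sum.cong)
  also have "\<dots> = (if i = 0 then a * Z $$ (0,j) + b * Z $$ (k,j) else if i = k then c * Z $$ (0,j) + d * Z $$ (k,j) else Z $$ (i,j))"
    by (rule emb_row_sum[OF k i])
  finally show ?thesis .
qed

lemma emb_mult_vec_index:
  assumes k: "0 < k" "k < n" and v: "v \<in> carrier_vec n" and i: "i < n"
  shows "(emb n k a b c d *\<^sub>v v) $ i =
    (if i = 0 then a * v $ 0 + b * v $ k else if i = k then c * v $ 0 + d * v $ k else v $ i)"
proof -
  have "(emb n k a b c d *\<^sub>v v) $ i = (\<Sum>l\<in>{0..<n}. emb n k a b c d $$ (i,l) * v $ l)"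
    using v i by (auto simp: scalar_prod_def intro!: sum.cong)
  also have "\<dots> = (if i = 0 then a * v $ 0 + b * v $ k else if i = k then c * v $ 0 + d * v $ k else v $ i)"
    by (rule emb_row_sum[OF k i])
  finally show ?thesis .
qed

lemma emb_emb:
  assumes k: "0 < k" "k < n"
  shows "emb n k a b c d * emb n k a' b' c' d' =
    emb n k (a * a' + b * c') (a * b' + b * d') (c * a' + d * c') (c * b' + d * d')"
  by (rule eq_matI) (use k in \<open>auto simp del: index_mult_mat(1) simp: emb_mult_index[OF k emb_carrier]\<close>)

lemma emb_one:
  assumes k: "0 < k" "k < n"
  shows "emb n k 1 0 0 1 = 1\<^sub>m n"
  by (rule eq_matI) (use k in \<open>auto\<close>)

lemma reduce_vec:
  fixes v :: "'a::idom vec"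
  assumes bz: "bezout_domain TYPE('a)" and v: "v \<in> carrier_vec n"
  shows "\<exists>U V. U \<in> carrier_mat n n \<and> V \<in> carrier_mat n n \<and> U * V = 1\<^sub>m n \<and> V * U = 1\<^sub>m n \<and>
     (\<forall>i. 0 < i \<and> i < n \<longrightarrow> (U *\<^sub>v v) $ i = 0)"
proof -
  have "\<forall>k. k \<le> n \<longrightarrow> (\<exists>U V. U \<in> carrier_mat n n \<and> V \<in> carrier_mat n n \<and> U * V = 1\<^sub>m n \<and> V * U = 1\<^sub>m n \<and>
     (\<forall>i. 0 < i \<and> i < k \<longrightarrow> (U *\<^sub>v v) $ i = 0))"
  proof (intro allI)
    fix k show "k \<le> n \<longrightarrow> (\<exists>U V. U \<in> carrier_mat n n \<and> V \<in> carrier_mat n n \<and> U * V = 1\<^sub>m n \<and> V * U = 1\<^sub>m n \<and>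
     (\<forall>i. 0 < i \<and> i < k \<longrightarrow> (U *\<^sub>v v) $ i = 0))"
    proof (induction k)
      case 0
      show ?case by (intro impI exI[of _ "1\<^sub>m n"]) auto
    next
      case (Suc k)
      show ?case
      proof
        assume kn: "Suc k \<le> n"
        then obtain U V where U: "U \<in> carrier_mat n n" and V: "V \<in> carrier_mat n n"
          and UV: "U * V = 1\<^sub>m n" and VU: "V * U = 1\<^sub>m n" and z: "\<forall>i. 0 < i \<and> i < k \<longrightarrow> (U *\<^sub>v v) $ i = 0"
          using Suc.IH by auto
        show "\<exists>U V. U \<in> carrier_mat n n \<and> V \<in> carrier_mat n n \<and> U * V = 1\<^sub>m n \<and> V * U = 1\<^sub>m n \<and>
          (\<forall>i. 0 < i \<and> i < Suc k \<longrightarrow> (U *\<^sub>v v) $ i = 0)"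
        proof (cases "k = 0")
          case True
          then show ?thesis using U V UV VU by (intro exI[of _ U] exI[of _ V]) auto
        next
          case False
          hence k: "0 < k" "k < n" using kn by auto
          define w where "w = U *\<^sub>v v"
          have w: "w \<in> carrier_vec n" using U v by (simp add: w_def)
          obtain d x y a' b' where ab: "w $ 0 = a' * d" "w $ k = b' * d" and d: "d = x * w $ 0 + y * w $ k"
            using bezout2[OF bz] by blast
          show ?thesis
          proof (cases "d = 0")
            case True
            hence "w $ k = 0" using ab by simp
            then show ?thesis using U V UV VU z unfolding w_def
              by (intro exI[of _ U] exI[of _ V]) (auto simp: less_Suc_eq)
          next
            case False
            have "d * (x * a' + y * b') = d * 1" using d ab by (simp add: algebra_simps)
            hence one: "x * a' + y * b' = 1" using False by simp
            define G where "G = emb n k x y (- b') a'"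
            define G' where "G' = emb n k a' (- y) b' x"
            have GG: "G * G' = 1\<^sub>m n" unfolding G_def G'_def emb_emb[OF k]
              using one emb_one[OF k] by (simp add: algebra_simps)
            have GG': "G' * G = 1\<^sub>m n" unfolding G_def G'_def emb_emb[OF k]
              using one emb_one[OF k] by (simp add: algebra_simps)
            have Gc: "G \<in> carrier_mat n n" "G' \<in> carrier_mat n n" by (auto simp: G_def G'_def)
            have 1: "(G * U) * (V * G') = 1\<^sub>m n"
            proof -
              have "(G * U) * (V * G') = G * (U * V) * G'" using Gc U V by (simp add: assocn[where n=n] multn[where n=n])
              thus ?thesis using UV GG Gc by simp
            qed
            have 2: "(V * G') * (G * U) = 1\<^sub>m n"
            proof -
              have "(V * G') * (G * U) = V * (G' * G) * U" using Gc U V by (simp add: assocn[where n=n] multn[where n=n])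
              thus ?thesis using VU GG' U V by simp
            qed
            have 3: "(G * U) *\<^sub>v v = G *\<^sub>v w" unfolding w_def using Gc U v by simp
            have "\<forall>i. 0 < i \<and> i < Suc k \<longrightarrow> ((G * U) *\<^sub>v v) $ i = 0"
            proof (intro allI impI)
              fix i assume i: "0 < i \<and> i < Suc k"
              have "((G * U) *\<^sub>v v) $ i = (G *\<^sub>v w) $ i" using 3 by simp
              also have "\<dots> = (if i = 0 then x * w $ 0 + y * w $ k else if i = k then (- b') * w $ 0 + a' * w $ k else w $ i)"
                unfolding G_def by (rule emb_mult_vec_index[OF k w]) (use i k in auto)
              also have "\<dots> = 0"
              proof (cases "i = k")
                case True
                then show ?thesis using i ab by (simp add: algebra_simps)
              next
                case False
                hence "i < k" using i by simp
                then show ?thesis using i z False by (simp add: w_def)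
              qed
              finally show "((G * U) *\<^sub>v v) $ i = 0" .
            qed
            then show ?thesis using 1 2 Gc U V by (intro exI[of _ "G * U"] exI[of _ "V * G'"]) auto
          qed
        qed
      qed
    qed
  qed
  thus ?thesis by auto
qed

lemma uminus_zero_mat'[simp]: "- (0\<^sub>m a b) = (0\<^sub>m a b :: 'a::group_add mat)"
  by (rule eq_matI) auto

lemma Dm_index[simp]: "i < n \<Longrightarrow> j < n \<Longrightarrow> Dm r n $$ (i,j) = (if i = j \<and> i < r then 1 else 0)"
  by (simp add: Dm_def)

lemma four_block_eqD:
  assumes "A \<in> carrier_mat n1 n1" "B \<in> carrier_mat n1 n2" "C \<in> carrier_mat n2 n1" "D \<in> carrier_mat n2 n2"
    "A' \<in> carrier_mat n1 n1" "B' \<in> carrier_mat n1 n2" "C' \<in> carrier_mat n2 n1" "D' \<in> carrier_mat n2 n2"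
    and eq: "four_block_mat A B C D = four_block_mat A' B' C' D'"
  shows "B = B'" "D = D'"
proof -
  show "B = B'"
  proof (rule eq_matI)
    fix i j assume ij: "i < dim_row B'" "j < dim_col B'"
    have "B $$ (i,j) = four_block_mat A B C D $$ (i, j + n1)" using assms(1-8) ij by simp
    also have "\<dots> = four_block_mat A' B' C' D' $$ (i, j + n1)" using eq by simp
    also have "\<dots> = B' $$ (i,j)" using assms(1-8) ij by simp
    finally show "B $$ (i,j) = B' $$ (i,j)" .
  qed (use assms in auto)
  show "D = D'"
  proof (rule eq_matI)
    fix i j assume ij: "i < dim_row D'" "j < dim_col D'"
    have "D $$ (i,j) = four_block_mat A B C D $$ (i + n1, j + n1)" using assms(1-8) ij by simp
    also have "\<dots> = four_block_mat A' B' C' D' $$ (i + n1, j + n1)" using eq by simp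
    also have "\<dots> = D' $$ (i,j)" using assms(1-8) ij by simp
    finally show "D $$ (i,j) = D' $$ (i,j)" .
  qed (use assms in auto)
qed

lemma idem_normal:
  fixes E :: "'a::idom mat"
  assumes bz: "bezout_domain TYPE('a)"
  shows "E \<in> carrier_mat n n \<Longrightarrow> E * E = E \<Longrightarrow> \<exists>r \<le> n. similar_mat E (Dm r n)"
proof (induction n arbitrary: E)
  case 0
  have "E = Dm 0 0" by (rule eq_matI) (use 0 in auto)
  thus ?case using similar_mat_refl[OF "0.prems"(1)] by auto
next
  case (Suc m)
  let ?n = "Suc m"
  have Ec: "E \<in> carrier_mat ?n ?n" and EE: "E * E = E" using Suc.prems by auto
  show ?case
  proof (cases "E = 0\<^sub>m ?n ?n")
    case True
    have "Dm 0 ?n = (0\<^sub>m ?n ?n :: 'a mat)" unfolding Dm_def by (rule dg_zero) auto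
    thus ?thesis using True similar_mat_refl[OF Ec] by (intro exI[of _ 0]) auto
  next
    case False
    obtain i j where ij: "i < ?n" "j < ?n" "E $$ (i,j) \<noteq> 0"
    proof -
      have "\<exists>i j. i < ?n \<and> j < ?n \<and> E $$ (i,j) \<noteq> 0"
      proof (rule ccontr)
        assume "\<not> ?thesis"
        hence "E = 0\<^sub>m ?n ?n" by (intro eq_matI) (use Ec in auto)
        thus False using False by simp
      qed
      thus ?thesis using that by blast
    qed
    define v where "v = col E j"
    have vc: "v \<in> carrier_vec ?n" by (intro carrier_vecI) (use Ec in \<open>simp add: v_def\<close>)
    have Ev: "E *\<^sub>v v = v"
    proof -
      have "E *\<^sub>v v = col (E * E) j" unfolding v_def by (rule sym[OF col_mult2[OF Ec Ec ij(2)]])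
      thus ?thesis using EE by (simp add: v_def)
    qed
    obtain U V where U: "U \<in> carrier_mat ?n ?n" and V: "V \<in> carrier_mat ?n ?n"
      and UV: "U * V = 1\<^sub>m ?n" and VU: "V * U = 1\<^sub>m ?n"
      and z: "\<forall>i. 0 < i \<and> i < ?n \<longrightarrow> (U *\<^sub>v v) $ i = 0"
      using reduce_vec[OF bz vc] by (elim exE conjE) (rule that; assumption)
    define u where "u = U *\<^sub>v v"
    have uc: "u \<in> carrier_vec ?n" using U vc by (simp add: u_def)
    define g where "g = u $ 0"
    have vu: "V *\<^sub>v u = v"
    proof -
      have "V *\<^sub>v u = (V * U) *\<^sub>v v" unfolding u_def using U V vc by simp
      thus ?thesis using VU vc by simp
    qed
    have g0: "g \<noteq> 0"
    proof
      assume g: "g = 0"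
      have "u = 0\<^sub>v ?n"
      proof (rule eq_vecI)
        fix i assume "i < dim_vec (0\<^sub>v ?n :: 'a vec)"
        thus "u $ i = 0\<^sub>v ?n $ i" using z g by (cases "i = 0") (auto simp: g_def u_def)
      qed (use uc in auto)
      hence "v = 0\<^sub>v ?n" using vu V by auto
      hence "v $ i = 0" using ij by simp
      moreover have "v $ i = E $$ (i,j)" using ij Ec by (simp add: v_def)
      ultimately have "E $$ (i,j) = 0" by simp
      thus False using ij by simp
    qed
    define E1 where "E1 = U * E * V"
    have E1c: "E1 \<in> carrier_mat ?n ?n" using U V Ec by (simp add: E1_def)
    have E1u: "E1 *\<^sub>v u = u"
    proof -
      have "E1 *\<^sub>v u = (U * (E * V)) *\<^sub>v u" unfolding E1_def using U V Ec by (simp add: assocn[where n="?n"])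
      also have "\<dots> = U *\<^sub>v ((E * V) *\<^sub>v u)" by (rule assoc_mult_mat_vec) (use U V Ec uc in auto)
      also have "\<dots> = U *\<^sub>v (E *\<^sub>v (V *\<^sub>v u))" by (subst assoc_mult_mat_vec[of E ?n ?n V ?n u]) (use Ec V uc in auto)
      also have "\<dots> = U *\<^sub>v v" using vu Ev by simp
      finally show ?thesis by (simp add: u_def)
    qed
    have col0: "E1 $$ (i, 0) = (if i = 0 then 1 else 0)" if i: "i < ?n" for i
    proof -
      have "(E1 *\<^sub>v u) $ i = (\<Sum>l\<in>{0..<?n}. E1 $$ (i,l) * u $ l)"
        using E1c uc i by (auto simp: scalar_prod_def intro!: sum.cong)
      also have "\<dots> = (\<Sum>l\<in>{0..<?n}. if l = 0 then E1 $$ (i,0) * g else 0)"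
        by (rule sum.cong) (use z in \<open>auto simp: g_def u_def\<close>)
      also have "\<dots> = E1 $$ (i,0) * g" by simp
      finally have "E1 $$ (i,0) * g = u $ i" using E1u by simp
      also have "u $ i = (if i = 0 then 1 else 0) * g" using z i by (auto simp: g_def u_def)
      finally show ?thesis using g0 by simp
    qed
    have E1E1: "E1 * E1 = E1"
    proof -
      have "E1 * E1 = U * (E * (V * U) * E) * V" unfolding E1_def using U V Ec
        by (simp add: assocn[where n="?n"] multn[where n="?n"])
      also have "\<dots> = U * (E * E) * V" using VU Ec by simp
      finally show ?thesis using EE by (simp add: E1_def)
    qed
    obtain A1 A2 A3 A4 where sb: "split_block E1 1 1 = (A1,A2,A3,A4)" by (cases "split_block E1 1 1") auto
    have dims: "dim_row E1 = 1 + m" "dim_col E1 = 1 + m" using E1c by auto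
    note spl = split_block[OF sb dims]
    have A1: "A1 = 1\<^sub>m 1"
    proof -
      have "A1 = mat 1 1 (\<lambda>ij. E1 $$ ij)" using sb unfolding split_block_def Let_def by auto
      thus ?thesis using col0[of 0] by (intro eq_matI) auto
    qed
    have A3: "A3 = 0\<^sub>m m 1"
    proof -
      have "A3 = mat m 1 (\<lambda>(i,j). E1 $$ (i+1,j))" using sb dims unfolding split_block_def Let_def by auto
      thus ?thesis using col0 by (intro eq_matI) auto
    qed
    have A2c: "A2 \<in> carrier_mat 1 m" and A4c: "A4 \<in> carrier_mat m m" using spl by auto
    have E1b: "E1 = four_block_mat (1\<^sub>m 1) A2 (0\<^sub>m m 1) A4" using spl A1 A3 by simp
    have "E1 * E1 = four_block_mat (1\<^sub>m 1 * 1\<^sub>m 1 + A2 * 0\<^sub>m m 1) (1\<^sub>m 1 * A2 + A2 * A4)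
       (0\<^sub>m m 1 * 1\<^sub>m 1 + A4 * 0\<^sub>m m 1) (0\<^sub>m m 1 * A2 + A4 * A4)"
      unfolding E1b by (rule mult_four_block_mat) (use A2c A4c in auto)
    also have "\<dots> = four_block_mat (1\<^sub>m 1) (A2 + A2 * A4) (0\<^sub>m m 1) (A4 * A4)"
      using A2c A4c by simp
    finally have "four_block_mat (1\<^sub>m 1) (A2 + A2 * A4) (0\<^sub>m m 1) (A4 * A4) = four_block_mat (1\<^sub>m 1) A2 (0\<^sub>m m 1) A4"
      using E1E1 E1b by simp
    moreover have c1: "A2 + A2 * A4 \<in> carrier_mat 1 m" and c2: "A4 * A4 \<in> carrier_mat m m" using A2c A4c by auto
    ultimately have A224: "A2 + A2 * A4 = A2" and A44: "A4 * A4 = A4"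
      using four_block_eqD[OF one_carrier_mat c1 zero_carrier_mat c2 one_carrier_mat A2c zero_carrier_mat A4c]
      by blast+
    have A24: "A2 * A4 = 0\<^sub>m 1 m"
    proof (rule eq_matI)
      fix i j assume ij: "i < dim_row (0\<^sub>m 1 m :: 'a mat)" "j < dim_col (0\<^sub>m 1 m :: 'a mat)"
      have "(A2 + A2 * A4) $$ (i,j) = A2 $$ (i,j)" using A224 by simp
      hence "A2 $$ (i,j) + (A2 * A4) $$ (i,j) = A2 $$ (i,j)" using ij A2c A4c
        by (simp del: index_mult_mat(1))
      thus "(A2 * A4) $$ (i,j) = 0\<^sub>m 1 m $$ (i,j)" using ij by simp
    qed (use A2c A4c in auto)
    obtain r' where r': "r' \<le> m" and simA4: "similar_mat A4 (Dm r' m)" using Suc.IH[OF A4c A44] by blast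
    define T where "T = four_block_mat (1\<^sub>m 1) (- A2) (0\<^sub>m m 1) (1\<^sub>m m)"
    define T' where "T' = four_block_mat (1\<^sub>m 1) A2 (0\<^sub>m m 1) (1\<^sub>m m)"
    define Blk where "Blk = four_block_mat (1\<^sub>m 1) (0\<^sub>m 1 m) (0\<^sub>m m 1) A4"
    have Tc: "T \<in> carrier_mat ?n ?n" "T' \<in> carrier_mat ?n ?n" "Blk \<in> carrier_mat ?n ?n"
      unfolding T_def T'_def Blk_def using A2c A4c by auto
    have TT': "T * T' = 1\<^sub>m ?n"
    proof -
      have "T * T' = four_block_mat (1\<^sub>m 1 * 1\<^sub>m 1 + (- A2) * 0\<^sub>m m 1) (1\<^sub>m 1 * A2 + (- A2) * 1\<^sub>m m)
         (0\<^sub>m m 1 * 1\<^sub>m 1 + 1\<^sub>m m * 0\<^sub>m m 1) (0\<^sub>m m 1 * A2 + 1\<^sub>m m * 1\<^sub>m m)"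
        unfolding T_def T'_def by (rule mult_four_block_mat) (use A2c in auto)
      also have "\<dots> = four_block_mat (1\<^sub>m 1) (0\<^sub>m 1 m) (0\<^sub>m m 1) (1\<^sub>m m)"
      proof -
        have negA: "A2 + - A2 = 0\<^sub>m 1 m" by (rule eq_matI) (use A2c in auto)
        show ?thesis using A2c negA by simp
      qed
      finally show ?thesis by simp
    qed
    have T'T: "T' * T = 1\<^sub>m ?n"
    proof -
      have "T' * T = four_block_mat (1\<^sub>m 1 * 1\<^sub>m 1 + A2 * 0\<^sub>m m 1) (1\<^sub>m 1 * (- A2) + A2 * 1\<^sub>m m)
         (0\<^sub>m m 1 * 1\<^sub>m 1 + 1\<^sub>m m * 0\<^sub>m m 1) (0\<^sub>m m 1 * (- A2) + 1\<^sub>m m * 1\<^sub>m m)"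
        unfolding T_def T'_def by (rule mult_four_block_mat) (use A2c in auto)
      also have "\<dots> = four_block_mat (1\<^sub>m 1) (0\<^sub>m 1 m) (0\<^sub>m m 1) (1\<^sub>m m)"
      proof -
        have nz: "- (0\<^sub>m m m) = (0\<^sub>m m m :: 'a mat)" by (rule eq_matI) auto
        show ?thesis using A2c nz by simp
      qed
      finally show ?thesis by simp
    qed
    have TB: "T * Blk = Blk"
    proof -
      have "T * Blk = four_block_mat (1\<^sub>m 1 * 1\<^sub>m 1 + (- A2) * 0\<^sub>m m 1) (1\<^sub>m 1 * 0\<^sub>m 1 m + (- A2) * A4)
         (0\<^sub>m m 1 * 1\<^sub>m 1 + 1\<^sub>m m * 0\<^sub>m m 1) (0\<^sub>m m 1 * 0\<^sub>m 1 m + 1\<^sub>m m * A4)"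
        unfolding T_def Blk_def by (rule mult_four_block_mat) (use A2c A4c in auto)
      also have "\<dots> = Blk" unfolding Blk_def using A2c A4c A24 by simp
      finally show ?thesis .
    qed
    have BT': "Blk * T' = E1"
    proof -
      have "Blk * T' = four_block_mat (1\<^sub>m 1 * 1\<^sub>m 1 + 0\<^sub>m 1 m * 0\<^sub>m m 1) (1\<^sub>m 1 * A2 + 0\<^sub>m 1 m * 1\<^sub>m m)
         (0\<^sub>m m 1 * 1\<^sub>m 1 + A4 * 0\<^sub>m m 1) (0\<^sub>m m 1 * A2 + A4 * 1\<^sub>m m)"
        unfolding T'_def Blk_def by (rule mult_four_block_mat) (use A2c A4c in auto)
      also have "\<dots> = E1" unfolding E1b using A2c A4c by simp
      finally show ?thesis .
    qed
    have s1: "similar_mat E1 Blk"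
      by (rule similar_matI[of _ _ T T' ?n]) (use Tc E1c TT' T'T TB BT' in auto)
    have s2: "similar_mat Blk (four_block_mat (1\<^sub>m 1) (0\<^sub>m 1 m) (0\<^sub>m m 1) (Dm r' m))"
      unfolding Blk_def by (rule similar_mat_four_block_0_0[OF similar_mat_refl[of _ 1] simA4]) (use A4c in auto)
    have s3: "four_block_mat (1\<^sub>m 1) (0\<^sub>m 1 m) (0\<^sub>m m 1) (Dm r' m) = (Dm (Suc r') ?n :: 'a mat)"
      by (rule eq_matI) auto
    have s0: "similar_mat E E1"
    proof (rule similar_matI[of _ _ V U ?n])
      show "E = V * E1 * U"
      proof -
        have "V * E1 * U = (V * U) * E * (V * U)" unfolding E1_def using U V Ec
          by (simp add: assocn[where n="?n"] multn[where n="?n"])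
        thus ?thesis using VU Ec by simp
      qed
    qed (use U V Ec E1c UV VU in auto)
    have "similar_mat E (Dm (Suc r') ?n)"
      using similar_mat_trans[OF s0 similar_mat_trans[OF s1 s2]] s3 by simp
    thus ?thesis using r' by (intro exI[of _ "Suc r'"]) auto
  qed
qed

lemma gi_unique:
  fixes M X Y :: "'a::comm_ring_1 mat"
  assumes Mc: "M \<in> carrier_mat n n" and gX: "is_group_inverse M X" and gY: "is_group_inverse M Y"
  shows "X = Y"
proof -
  have Xc: "X \<in> carrier_mat n n" and MX: "M * X = X * M" and XMX: "X * M * X = X" and MXM: "M * X * M = M"
    using gX Mc unfolding is_group_inverse_def Let_def by auto
  have Yc: "Y \<in> carrier_mat n n" and MY: "M * Y = Y * M" and YMY: "Y * M * Y = Y" and MYM: "M * Y * M = M"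
    using gY Mc unfolding is_group_inverse_def Let_def by auto
  note as = assocn[where n=n] multn[where n=n]
  have XMM: "X * (M * M) = M"
  proof -
    have "X * (M * M) = (X * M) * M" using Xc Mc by (simp add: as)
    also have "\<dots> = M * X * M" by (simp only: MX)
    finally show ?thesis using MXM by simp
  qed
  have MYY: "M * (Y * Y) = Y"
  proof -
    have "M * (Y * Y) = (M * Y) * Y" using Yc Mc by (simp add: as)
    also have "\<dots> = Y * M * Y" by (simp only: MY)
    finally show ?thesis using YMY by simp
  qed
  have "X = X * M * X" using XMX by simp
  also have "\<dots> = X * (M * X)" using Xc Mc by (simp add: as)
  also have "\<dots> = X * (X * M)" by (simp only: MX)
  also have "\<dots> = X * (X * (M * Y * M))" by (simp only: MYM)
  also have "\<dots> = X * (X * (M * (Y * M)))" using Xc Yc Mc by (simp add: as)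
  also have "\<dots> = X * (X * (M * (M * Y)))" by (simp only: MY)
  also have "\<dots> = X * ((X * (M * M)) * Y)" using Xc Yc Mc by (simp add: as)
  also have "\<dots> = X * (M * Y)" by (simp only: XMM)
  finally have 1: "X = X * (M * Y)" .
  have "Y = M * (Y * Y)" using MYY by simp
  also have "\<dots> = (M * X * M) * (Y * Y)" using MXM by simp
  also have "\<dots> = (X * M * M) * (Y * Y)" by (simp only: MX)
  also have "\<dots> = X * (M * (M * (Y * Y)))" using Xc Yc Mc by (simp add: as)
  also have "\<dots> = X * (M * Y)" by (simp only: MYY)
  finally show ?thesis using 1 by simp
qed

lemma gi_the:
  fixes M :: "'a::comm_ring_1 mat"
  assumes Mc: "M \<in> carrier_mat n n" and g: "group_invertible M"
  shows "is_group_inverse M (group_inv M)"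
proof -
  from g obtain X where X: "is_group_inverse M X" unfolding group_invertible_def by blast
  show ?thesis unfolding group_inv_def
  proof (rule theI[of _ X])
    show "is_group_inverse M X" by (rule X)
    fix Y assume "is_group_inverse M Y"
    thus "Y = X" by (rule sym[OF gi_unique[OF Mc X]])
  qed
qed

lemma key_alg:
  fixes A M N Mi Ni Z :: "'a::comm_ring_1 mat"
  assumes c: "A \<in> carrier_mat n n" "M \<in> carrier_mat n n" "N \<in> carrier_mat n n"
    "Mi \<in> carrier_mat n n" "Ni \<in> carrier_mat n n" "Z \<in> carrier_mat n n"
    and R1: "M * A = A * N" and R2: "Z * A = N * N" and R3: "A * Z = M * M"
    and MMi: "M * Mi = Mi * M" and MiMMi: "Mi * M * Mi = Mi" and MMiM: "M * Mi * M = M"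
    and NNi: "N * Ni = Ni * N" and NiNNi: "Ni * N * Ni = Ni" and NNiN: "N * Ni * N = N"
  shows "A * (Ni * (Ni * Z)) = M * Mi" "Ni * (Ni * Z) * A = N * Ni"
proof -
  note as = assocn[where n=n] multn[where n=n]
  have D1: "Mi * (M * M) = M"
  proof -
    have "Mi * (M * M) = Mi * M * M" using c by (simp add: as)
    also have "\<dots> = M * Mi * M" by (simp only: MMi)
    finally show ?thesis using MMiM by simp
  qed
  have D2: "Mi * (M * (M * M)) = M * M"
  proof -
    have "Mi * (M * (M * M)) = (Mi * (M * M)) * M" using c by (simp add: as)
    thus ?thesis using D1 by simp
  qed
  have D3: "M * Mi = Mi * (Mi * (Mi * (M * (M * M))))"
    using D2 D1 MMi by simp
  have E1: "Ni = N * (Ni * Ni)"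
  proof -
    have "Ni = Ni * N * Ni" using NiNNi by simp
    also have "\<dots> = N * Ni * Ni" by (simp only: NNi)
    also have "\<dots> = N * (Ni * Ni)" by (rule assocn) (use c in auto)
    finally show ?thesis .
  qed
  have E2: "Ni * Ni = N * (Ni * (Ni * Ni))"
  proof -
    have "N * (Ni * (Ni * Ni)) = (N * (Ni * Ni)) * Ni" using c by (simp add: as)
    also have "\<dots> = Ni * Ni" by (subst E1[symmetric]) (rule refl)
    finally show ?thesis by simp
  qed
  have E3: "N * (N * Ni) = N"
  proof -
    have "N * (N * Ni) = N * (Ni * N)" by (simp only: NNi)
    also have "\<dots> = N * Ni * N" using c by (simp add: as)
    finally show ?thesis using NNiN by simp
  qed
  have E4: "N * (N * (Ni * Ni)) = N * Ni"
  proof -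
    have "N * (N * (Ni * Ni)) = (N * (N * Ni)) * Ni" using c by (simp add: as)
    thus ?thesis using E3 by simp
  qed
  have E5: "Ni * (Ni * (N * N)) = N * Ni"
  proof -
    have "Ni * (N * N) = Ni * N * N" using c by (simp add: as)
    also have "\<dots> = N * Ni * N" by (simp only: NNi)
    finally have "Ni * (N * N) = N" using NNiN by simp
    thus ?thesis using NNi by simp
  qed
  have R4: "A * (N * Z) = M * (M * M)"
  proof -
    have "A * (N * Z) = (A * N) * Z" using c by (simp add: as)
    also have "\<dots> = (M * A) * Z" using R1 by simp
    also have "\<dots> = M * (A * Z)" using c by (simp add: as)
    finally show ?thesis using R3 by simp
  qed
  have R1c: "M * (A * X) = A * (N * X)" if X: "X \<in> carrier_mat n n" for X
  proof -
    have "M * (A * X) = (M * A) * X" using c X by (simp add: as)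
    also have "\<dots> = (A * N) * X" using R1 by simp
    finally show ?thesis using c X by (simp add: as)
  qed
  define V where "V = Ni * (Ni * (Ni * Z))"
  have Vc: "V \<in> carrier_mat n n" using c by (simp add: V_def)
  define W where "W = A * (Ni * (Ni * Z))"
  have Wc: "W \<in> carrier_mat n n" using c by (simp add: W_def)
  have S1: "W = M * (A * V)"
  proof -
    have "W = A * ((Ni * Ni) * Z)" unfolding W_def using c by (simp add: as)
    also have "\<dots> = A * ((N * (Ni * (Ni * Ni))) * Z)" by (subst E2[symmetric]) (rule refl)
    also have "\<dots> = A * (N * V)" unfolding V_def using c by (simp add: as)
    finally show ?thesis using R1c[OF Vc] by simp
  qed
  have S2: "M * Mi * W = W"
  proof -
    have "M * Mi * W = (M * Mi * M) * (A * V)" using S1 c Vc by (simp add: as)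
    thus ?thesis using MMiM S1 by simp
  qed
  have S3: "M * (M * (M * W)) = M * (M * M)"
  proof -
    define V' where "V' = Ni * (Ni * Z)"
    have V'c: "V' \<in> carrier_mat n n" using c by (simp add: V'_def)
    have NV': "N * V' \<in> carrier_mat n n" "N * (N * V') \<in> carrier_mat n n" using c V'c by auto
    have "M * (M * (M * W)) = M * (M * (M * (A * V')))" by (simp add: W_def V'_def)
    also have "\<dots> = M * (M * (A * (N * V')))" by (simp only: R1c[OF V'c])
    also have "\<dots> = M * (A * (N * (N * V')))" by (simp only: R1c[OF NV'(1)])
    also have "\<dots> = A * (N * (N * (N * V')))" by (simp only: R1c[OF NV'(2)])
    also have "\<dots> = A * (N * ((N * (N * (Ni * Ni))) * Z))" unfolding V'_def using c by (simp add: as)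
    also have "\<dots> = A * (N * ((N * Ni) * Z))" by (simp only: E4)
    also have "\<dots> = A * ((N * (N * Ni)) * Z)" using c by (simp add: as)
    also have "\<dots> = A * (N * Z)" by (simp only: E3)
    finally show ?thesis using R4 by simp
  qed
  have S5: "M * Mi * W = M * Mi"
  proof -
    have "M * Mi * W = Mi * (Mi * (Mi * (M * (M * M)))) * W" by (simp only: D3)
    also have "\<dots> = Mi * (Mi * (Mi * (M * (M * (M * W)))))" using c Wc by (simp add: as)
    also have "\<dots> = Mi * (Mi * (Mi * (M * (M * M))))" by (simp only: S3)
    finally show ?thesis using D3 by simp
  qed
  show "A * (Ni * (Ni * Z)) = M * Mi" using S2 S5 by (simp add: W_def)
  have "Ni * (Ni * Z) * A = Ni * (Ni * (Z * A))" using c by (simp add: as)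
  also have "\<dots> = Ni * (Ni * (N * N))" by (simp only: R2)
  finally show "Ni * (Ni * Z) * A = N * Ni" using E5 by simp
qed

theorem corollary3p3:
  fixes A B C :: "'a::idom mat" and n :: nat
  assumes "bezout_domain TYPE('a)"
    and "A \<in> carrier_mat n n" "B \<in> carrier_mat n n" "C \<in> carrier_mat n n"
    and "A * B * A = A * C * A"
    and "group_invertible (A * B)" "group_invertible (C * A)"
  shows "similar_mat (A * B * group_inv (A * B)) (C * A * group_inv (C * A))"
proof -
  note bz = assms(1)
  have Ac: "A \<in> carrier_mat n n" and Bc: "B \<in> carrier_mat n n" and Cc: "C \<in> carrier_mat n n"
    using assms by auto
  note as = assocn[where n=n] multn[where n=n]
  define M where "M = A * B"
  define N where "N = C * A"
  define Mi where "Mi = group_inv M"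
  define Ni where "Ni = group_inv N"
  define Z where "Z = C * A * B"
  have Mc: "M \<in> carrier_mat n n" and Nc: "N \<in> carrier_mat n n" and Zc: "Z \<in> carrier_mat n n"
    using Ac Bc Cc by (auto simp: M_def N_def Z_def)
  have gM: "is_group_inverse M Mi" unfolding Mi_def by (rule gi_the[OF Mc]) (use assms(6) in \<open>simp add: M_def\<close>)
  have gN: "is_group_inverse N Ni" unfolding Ni_def by (rule gi_the[OF Nc]) (use assms(7) in \<open>simp add: N_def\<close>)
  have Mic: "Mi \<in> carrier_mat n n" and MMi: "M * Mi = Mi * M" and MiMMi: "Mi * M * Mi = Mi" and MMiM: "M * Mi * M = M"
    using gM Mc unfolding is_group_inverse_def Let_def by auto
  have Nic: "Ni \<in> carrier_mat n n" and NNi: "N * Ni = Ni * N" and NiNNi: "Ni * N * Ni = Ni" and NNiN: "N * Ni * N = N"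
    using gN Nc unfolding is_group_inverse_def Let_def by auto
  have h: "A * (B * A) = A * (C * A)"
  proof -
    have "A * (B * A) = A * B * A" using Ac Bc by (simp add: as)
    also have "\<dots> = A * C * A" by (rule assms(5))
    also have "\<dots> = A * (C * A)" using Ac Cc by (simp add: as)
    finally show ?thesis .
  qed
  have R1: "M * A = A * N"
  proof -
    have "M * A = A * (B * A)" unfolding M_def using Ac Bc by (simp add: as)
    thus ?thesis using h by (simp add: N_def)
  qed
  have R2: "Z * A = N * N"
  proof -
    have "Z * A = C * (A * (B * A))" unfolding Z_def using Ac Bc Cc by (simp add: as)
    also have "\<dots> = C * (A * (C * A))" by (simp only: h)
    also have "\<dots> = N * N" unfolding N_def using Ac Bc Cc by (simp add: as)
    finally show ?thesis .
  qed
  have R3: "A * Z = M * M"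
  proof -
    have "A * Z = (A * (C * A)) * B" unfolding Z_def using Ac Bc Cc by (simp add: as)
    also have "\<dots> = (A * (B * A)) * B" by (simp only: h)
    also have "\<dots> = M * M" unfolding M_def using Ac Bc Cc by (simp add: as)
    finally show ?thesis .
  qed
  note key = key_alg[OF Ac Mc Nc Mic Nic Zc R1 R2 R3 MMi MiMMi MMiM NNi NiNNi NNiN]
  define Y where "Y = Ni * (Ni * Z)"
  have Yc: "Y \<in> carrier_mat n n" using Nic Zc by (simp add: Y_def)
  have XY: "A * Y = M * Mi" and YX: "Y * A = N * Ni" using key by (auto simp: Y_def)
  have EE: "M * Mi * (M * Mi) = M * Mi"
  proof -
    have "M * Mi * (M * Mi) = (M * Mi * M) * Mi" using Mc Mic by (simp add: as)
    thus ?thesis using MMiM by simp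
  qed
  have FF: "N * Ni * (N * Ni) = N * Ni"
  proof -
    have "N * Ni * (N * Ni) = (N * Ni * N) * Ni" using Nc Nic by (simp add: as)
    thus ?thesis using NNiN by simp
  qed
  have Ec: "M * Mi \<in> carrier_mat n n" and Fc: "N * Ni \<in> carrier_mat n n" using Mc Mic Nc Nic by auto
  obtain r where r: "r \<le> n" "similar_mat (M * Mi) (Dm r n)"
    using idem_normal[OF bz Ec EE] by blast
  obtain s where s: "s \<le> n" "similar_mat (N * Ni) (Dm s n)"
    using idem_normal[OF bz Fc FF] by blast
  have rs: "r = s" by (rule sim_mvn_eq[OF Ac Yc XY YX r(2) s(2) r(1) s(1)])
  have "similar_mat (M * Mi) (N * Ni)"
    using similar_mat_trans[OF r(2) similar_mat_sym[OF s(2)[folded rs]]] .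
  thus ?thesis by (simp add: M_def N_def Mi_def Ni_def)
qed

end
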